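(* If two topological large scale spaces $X$ and $Y$ are coarsely equivalent, then $\mathrm{Ends}(X)$ is homeomorphic to $\mathrm{Ends}(Y)$.
   Context: A large scale space is a set $X$ with a family $\mathbb{LSS}$ of covers (uniformly bounded covers) such that $st(\mathcal U,\mathcal V)\in\mathbb{LSS}$ whenever $\mathcal U,\mathcal V\in\mathbb{LSS}$, and any cover each of whose elements lies in some element of a member of $\mathbb{LSS}$ is in $\mathbb{LSS}$; here $st(x,\mathcal U)$ is the union of elements of $\mathcal U$ containing $x$, $st(A,\mathcal U)=\bigcup_{x\in A}st(x,\mathcal U)$, $st(\mathcal U,\mathcal V)=\{st(A,\mathcal V):A\in\mathcal U\}$. Bounded sets are subsets of elements of uniformly bounded covers; the union of two bounded sets is assumed bounded. $A$ is coarsely clopen if $st(A,\mathcal U)\cap st(X\setminus A,\mathcal U)$ is bounded for every uniformly bounded $\mathcal U$. An end is a family of unbounded coarsely clopen sets maximal with respect to all finite intersections being unbounded; $\mathrm{Ends}(X)$ is the set of ends. A topological large scale space additionally has a topology for which some uniformly bounded cover consists of open sets; $\mathrm{Ends}(X)$ is topologized by the basis $U_{end}=\{E\in\mathrm{Ends}(X):U\in E\}$, $U$ ranging over open coarsely clopen subsets of $X$. For maps $\varphi,\varphi':X\to Y$ of large scale spaces: they are close if there is a uniformly bounded cover $\mathcal U$ of $Y$ with $\varphi(x)\in st(\varphi'(x),\mathcal U)$ for all $x$; $\varphi$ is coarse if preimages of bounded sets are bounded; $\varphi$ is large scale continuous if for every uniformly bounded cover $\mathcal U$ of $X$ the family $\varphi(\mathcal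 U)$ refines a uniformly bounded cover of $Y$. $\varphi$ is a coarse equivalence if it is coarse and large scale continuous and there is a coarse large scale continuous $\psi:Y\to X$ with $\psi\circ\varphi$ close to $\mathrm{id}_X$ and $\varphi\circ\psi$ close to $\mathrm{id}_Y$; $X,Y$ are then coarsely equivalent. *)

theory Defs
  imports "HOL-Analysis.Analysis"
begin

definition is_cover :: "'a set \<Rightarrow> 'a set set \<Rightarrow> bool" where
  "is_cover X C \<longleftrightarrow> C \<subseteq> Pow X \<and> \<Union>C = X"

definition st_pt :: "'a \<Rightarrow> 'a set set \<Rightarrow> 'a set" where
  "st_pt x U = \<Union>{A \<in> U. x \<in> A}"

definition st_set :: "'a set \<Rightarrow> 'a set set \<Rightarrow> 'a set" where
  "st_set A U = (\<Union>x\<in>A. st_pt x U)"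

definition st_cov :: "'a set set \<Rightarrow> 'a set set \<Rightarrow> 'a set set" where
  "st_cov U V = {st_set A V | A. A \<in> U}"

text \<open>Bounded sets: subsets of elements of uniformly bounded covers.\<close>
definition ls_bounded :: "'a set set set \<Rightarrow> 'a set \<Rightarrow> bool" where
  "ls_bounded L B \<longleftrightarrow> (\<exists>U\<in>L. \<exists>A\<in>U. B \<subseteq> A)"

definition large_scale_space :: "'a set \<Rightarrow> 'a set set set \<Rightarrow> bool" where
  "large_scale_space X L \<longleftrightarrow>
     (\<forall>U\<in>L. is_cover X U) \<and>
     (\<forall>U\<in>L. \<forall>V\<in>L. st_cov U V \<in> L) \<and>
     (\<forall>C. is_cover X C \<and> (\<forall>A\<in>C. \<exists>U\<in>L. \<exists>B\<in>U. A \<subseteq> B) \<longrightarrow> C \<in> L) \<and>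
     (\<forall>A B. ls_bounded L A \<and> ls_bounded L B \<longrightarrow> ls_bounded L (A \<union> B))"

definition topological_large_scale_space :: "'a topology \<Rightarrow> 'a set set set \<Rightarrow> bool" where
  "topological_large_scale_space T L \<longleftrightarrow>
     large_scale_space (topspace T) L \<and> (\<exists>U\<in>L. \<forall>A\<in>U. openin T A)"

definition coarsely_clopen :: "'a set \<Rightarrow> 'a set set set \<Rightarrow> 'a set \<Rightarrow> bool" where
  "coarsely_clopen X L A \<longleftrightarrow> A \<subseteq> X \<and>
     (\<forall>U\<in>L. ls_bounded L (st_set A U \<inter> st_set (X - A) U))"

definition fin_unbounded_family :: "'a set \<Rightarrow> 'a set set set \<Rightarrow> 'a set set \<Rightarrow> bool" where
  "fin_unbounded_family X L E \<longleftrightarrow>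
     (\<forall>A\<in>E. coarsely_clopen X L A \<and> \<not> ls_bounded L A) \<and>
     (\<forall>F. F \<subseteq> E \<and> finite F \<and> F \<noteq> {} \<longrightarrow> \<not> ls_bounded L (\<Inter>F))"

definition is_end :: "'a set \<Rightarrow> 'a set set set \<Rightarrow> 'a set set \<Rightarrow> bool" where
  "is_end X L E \<longleftrightarrow> fin_unbounded_family X L E \<and>
     (\<forall>E'. fin_unbounded_family X L E' \<and> E \<subseteq> E' \<longrightarrow> E' = E)"

definition Ends :: "'a set \<Rightarrow> 'a set set set \<Rightarrow> 'a set set set" where
  "Ends X L = {E. is_end X L E}"

definition ends_topology :: "'a topology \<Rightarrow> 'a set set set \<Rightarrow> 'a set set topology" where
  "ends_topology T L =
     subtopology
       (topology_generated_by
          {{E \<in> Ends (topspace T) L. U \<in> E} | U. openin T U \<and> coarsely_clopen (topspace T) L U})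
       (Ends (topspace T) L)"

definition maps_close :: "'a set \<Rightarrow> 'b set set set \<Rightarrow> ('a \<Rightarrow> 'b) \<Rightarrow> ('a \<Rightarrow> 'b) \<Rightarrow> bool" where
  "maps_close X LY f g \<longleftrightarrow> (\<exists>U\<in>LY. \<forall>x\<in>X. f x \<in> st_pt (g x) U)"

definition coarse_map :: "'a set \<Rightarrow> 'a set set set \<Rightarrow> 'b set \<Rightarrow> 'b set set set \<Rightarrow> ('a \<Rightarrow> 'b) \<Rightarrow> bool" where
  "coarse_map X LX Y LY f \<longleftrightarrow> (\<forall>B. ls_bounded LY B \<longrightarrow> ls_bounded LX (X \<inter> f -` B))"

definition ls_continuous :: "'a set set set \<Rightarrow> 'b set set set \<Rightarrow> ('a \<Rightarrow> 'b) \<Rightarrow> bool" where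
  "ls_continuous LX LY f \<longleftrightarrow> (\<forall>U\<in>LX. \<exists>V\<in>LY. \<forall>A\<in>U. \<exists>B\<in>V. f ` A \<subseteq> B)"

definition coarse_equivalence ::
  "'a set \<Rightarrow> 'a set set set \<Rightarrow> 'b set \<Rightarrow> 'b set set set \<Rightarrow> ('a \<Rightarrow> 'b) \<Rightarrow> bool" where
  "coarse_equivalence X LX Y LY f \<longleftrightarrow>
     f ` X \<subseteq> Y \<and> coarse_map X LX Y LY f \<and> ls_continuous LX LY f \<and>
     (\<exists>g. g ` Y \<subseteq> X \<and> coarse_map Y LY X LX g \<and> ls_continuous LY LX g \<and>
          maps_close X LX (g \<circ> f) id \<and> maps_close Y LY (f \<circ> g) id)"

definition coarsely_equivalent ::
  "'a set \<Rightarrow> 'a set set set \<Rightarrow> 'b set \<Rightarrow> 'b set set set \<Rightarrow> bool" where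
  "coarsely_equivalent X LX Y LY \<longleftrightarrow> (\<exists>f. coarse_equivalence X LX Y LY f)"

end

theory Submission
  imports Defs
begin

lemma lss_cover: "large_scale_space X L \<Longrightarrow> U \<in> L \<Longrightarrow> is_cover X U"
  unfolding large_scale_space_def by blast

lemma lss_stcov: "large_scale_space X L \<Longrightarrow> U \<in> L \<Longrightarrow> V \<in> L \<Longrightarrow> st_cov U V \<in> L"
  unfolding large_scale_space_def by blast

lemma cover_sub: "is_cover X U \<Longrightarrow> A \<in> U \<Longrightarrow> A \<subseteq> X"
  unfolding is_cover_def by blast

lemma mem_st_set: "x \<in> st_set A U \<longleftrightarrow> (\<exists>a\<in>A. \<exists>C\<in>U. a \<in> C \<and> x \<in> C)"
  unfolding st_set_def st_pt_def by blast

lemma bnd_mono: "ls_bounded L B \<Longrightarrow> A \<subseteq> B \<Longrightarrow> ls_bounded L A"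
  unfolding ls_bounded_def by blast

lemma bnd_Un: "large_scale_space X L \<Longrightarrow> ls_bounded L A \<Longrightarrow> ls_bounded L B \<Longrightarrow> ls_bounded L (A \<union> B)"
  unfolding large_scale_space_def by blast

lemma cc_sub: "coarsely_clopen X L A \<Longrightarrow> A \<subseteq> X"
  unfolding coarsely_clopen_def by blast

lemma cc_compl: assumes "coarsely_clopen X L A" shows "coarsely_clopen X L (X - A)"
proof -
  have "X - (X - A) = A" using cc_sub[OF assms] by blast
  then show ?thesis using assms unfolding coarsely_clopen_def by (simp add: Int_commute)
qed

lemma st_mono: "A \<subseteq> B \<Longrightarrow> st_set A U \<subseteq> st_set B U"
  unfolding st_set_def by blast

lemma st_Un: "st_set (A \<union> B) U = st_set A U \<union> st_set B U"
  unfolding st_set_def by blast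

lemma st_bounded:
  assumes "large_scale_space X L" "ls_bounded L D" "U \<in> L"
  shows "ls_bounded L (st_set D U)"
proof -
  obtain V A where V: "V \<in> L" "A \<in> V" "D \<subseteq> A" using assms(2) unfolding ls_bounded_def by blast
  have "st_cov V U \<in> L" using lss_stcov[OF assms(1) V(1) assms(3)] .
  moreover have "st_set A U \<in> st_cov V U" using V(2) unfolding st_cov_def by blast
  moreover have "st_set D U \<subseteq> st_set A U" using V(3) by (rule st_mono)
  ultimately show ?thesis unfolding ls_bounded_def by blast
qed

lemma cc_Un_bounded:
  assumes "large_scale_space X L" "coarsely_clopen X L A" "ls_bounded L D" "D \<subseteq> X"
  shows "coarsely_clopen X L (A \<union> D)"
  unfolding coarsely_clopen_def
proof (intro conjI ballI)
  show "A \<union> D \<subseteq> X" using cc_sub[OF assms(2)] assms(4) by blast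
  fix U assume U: "U \<in> L"
  have "st_set (A \<union> D) U \<inter> st_set (X - (A \<union> D)) U \<subseteq>
        (st_set A U \<inter> st_set (X - A) U) \<union> st_set D U"
    using st_mono[of "X - (A \<union> D)" "X - A" U] st_Un[of A D U] by blast
  moreover have "ls_bounded L ((st_set A U \<inter> st_set (X - A) U) \<union> st_set D U)"
    using assms(2) U st_bounded[OF assms(1,3) U] bnd_Un[OF assms(1)]
    unfolding coarsely_clopen_def by blast
  ultimately show "ls_bounded L (st_set (A \<union> D) U \<inter> st_set (X - (A \<union> D)) U)"
    using bnd_mono by blast
qed

lemma st_self: "is_cover X U \<Longrightarrow> A \<subseteq> X \<Longrightarrow> A \<subseteq> st_set A U"
  unfolding is_cover_def st_set_def st_pt_def by blast

lemma st_open: assumes "\<forall>A\<in>U. openin T A" shows "openin T (st_set B U)"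
proof -
  have "st_set B U = \<Union>{A \<in> U. A \<inter> B \<noteq> {}}" unfolding st_set_def st_pt_def by blast
  then show ?thesis using assms by (auto intro!: openin_Union)
qed

lemma L1:
  assumes lss: "large_scale_space X L" and E: "is_end X L E" and A: "A \<in> E"
    and B: "coarsely_clopen X L B" and AB: "A \<subseteq> B \<or> ls_bounded L (A - B)"
  shows "B \<in> E"
proof -
  have fE: "fin_unbounded_family X L E" using E unfolding is_end_def by blast
  have Aunb: "\<not> ls_bounded L A" using fE A unfolding fin_unbounded_family_def by blast
  have key: "ls_bounded L S" if "ls_bounded L T" "S \<subseteq> T \<union> (A - B)" for S T
  proof (cases "A \<subseteq> B")
    case True then show ?thesis using that bnd_mono by blast
  next
    case False then have "ls_bounded L (A - B)" using AB by blast
    then show ?thesis using that bnd_Un[OF lss] bnd_mono by blast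
  qed
  have Bunb: "\<not> ls_bounded L B"
  proof
    assume "ls_bounded L B"
    then have "ls_bounded L A" using key[of B A] by blast
    then show False using Aunb by blast
  qed
  have "fin_unbounded_family X L (insert B E)"
    unfolding fin_unbounded_family_def
  proof (rule conjI)
    show "\<forall>C\<in>insert B E. coarsely_clopen X L C \<and> \<not> ls_bounded L C"
      using B Bunb fE unfolding fin_unbounded_family_def by blast
  next
    show "\<forall>F. F \<subseteq> insert B E \<and> finite F \<and> F \<noteq> {} \<longrightarrow> \<not> ls_bounded L (\<Inter>F)"
    proof (intro allI impI)
    fix F assume F: "F \<subseteq> insert B E \<and> finite F \<and> F \<noteq> {}"
    show "\<not> ls_bounded L (\<Inter>F)"
    proof (cases "B \<in> F")
      case False
      then have "F \<subseteq> E" using F by blast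
      then show ?thesis using F fE unfolding fin_unbounded_family_def by blast
    next
      case True
      define F' where "F' = insert A (F - {B})"
      have "F' \<subseteq> E" "finite F'" "F' \<noteq> {}" using F A unfolding F'_def by auto
      then have nb: "\<not> ls_bounded L (\<Inter>F')" using fE unfolding fin_unbounded_family_def by blast
      have "\<Inter>F' \<subseteq> \<Inter>F \<union> (A - B)" unfolding F'_def by blast
      then show ?thesis using key nb by blast
    qed
    qed
  qed
  then have "insert B E = E" using E unfolding is_end_def by blast
  then show ?thesis by blast
qed

lemma end_elim:
  assumes E: "is_end X L E" and A: "coarsely_clopen X L A" and nA: "A \<notin> E"
  shows "\<exists>F\<subseteq>E. finite F \<and> ls_bounded L (\<Inter>F \<inter> A)"
proof (rule ccontr)
  assume H: "\<not> ?thesis"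
  have fE: "fin_unbounded_family X L E" using E unfolding is_end_def by blast
  have "fin_unbounded_family X L (insert A E)"
    unfolding fin_unbounded_family_def
  proof (rule conjI)
    have "\<not> ls_bounded L A"
    proof
      assume "ls_bounded L A"
      then have "ls_bounded L (\<Inter>{} \<inter> A)" by simp
      then show False using H by blast
    qed
    then show "\<forall>C\<in>insert A E. coarsely_clopen X L C \<and> \<not> ls_bounded L C"
      using A fE unfolding fin_unbounded_family_def by blast
  next
    show "\<forall>F. F \<subseteq> insert A E \<and> finite F \<and> F \<noteq> {} \<longrightarrow> \<not> ls_bounded L (\<Inter>F)"
    proof (intro allI impI)
    fix F assume F: "F \<subseteq> insert A E \<and> finite F \<and> F \<noteq> {}"
    show "\<not> ls_bounded L (\<Inter>F)"
    proof (cases "A \<in> F")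
      case False
      then have "F \<subseteq> E" using F by blast
      then show ?thesis using F fE unfolding fin_unbounded_family_def by blast
    next
      case True
      have "F - {A} \<subseteq> E" "finite (F - {A})" using F by auto
      moreover have "\<Inter>F = \<Inter>(F - {A}) \<inter> A" using True by blast
      ultimately show ?thesis using H by auto
    qed
    qed
  qed
  then have "insert A E = E" using E unfolding is_end_def by blast
  then show False using nA by blast
qed

lemma end_intro:
  assumes fE: "fin_unbounded_family X L E"
    and H: "\<And>A. coarsely_clopen X L A \<Longrightarrow> A \<notin> E \<Longrightarrow> \<exists>F\<subseteq>E. finite F \<and> ls_bounded L (\<Inter>F \<inter> A)"
  shows "is_end X L E"
  unfolding is_end_def
proof (intro conjI allI impI fE)
  fix E' assume E': "fin_unbounded_family X L E' \<and> E \<subseteq> E'"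
  show "E' = E"
  proof (rule ccontr)
    assume "E' \<noteq> E"
    then obtain A where A: "A \<in> E'" "A \<notin> E" using E' by blast
    then have "coarsely_clopen X L A" using E' unfolding fin_unbounded_family_def by blast
    then obtain F where F: "F \<subseteq> E" "finite F" "ls_bounded L (\<Inter>F \<inter> A)" using H A by blast
    have "insert A F \<subseteq> E'" "finite (insert A F)" "insert A F \<noteq> {}" using F A E' by auto
    then have "\<not> ls_bounded L (\<Inter>(insert A F))" using E' unfolding fin_unbounded_family_def by blast
    moreover have "\<Inter>(insert A F) = \<Inter>F \<inter> A" by blast
    ultimately show False using F by simp
  qed
qed

lemma pullback_cc:
  assumes lX: "large_scale_space X LX" and fXY: "f ` X \<subseteq> Y"
    and co: "coarse_map X LX Y LY f" and lc: "ls_continuous LX LY f"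
    and B: "coarsely_clopen Y LY B"
  shows "coarsely_clopen X LX (X \<inter> f -` B)"
  unfolding coarsely_clopen_def
proof (intro conjI ballI)
  show "X \<inter> f -` B \<subseteq> X" by blast
  fix U assume U: "U \<in> LX"
  obtain V where V: "V \<in> LY" "\<forall>A\<in>U. \<exists>C\<in>V. f ` A \<subseteq> C"
    using bspec[OF lc[unfolded ls_continuous_def] U] by (elim bexE) (rule that)
  have Ucov: "\<forall>A\<in>U. A \<subseteq> X" using cover_sub[OF lss_cover[OF lX U]] by blast
  have sub: "st_set (X \<inter> f -` B) U \<inter> st_set (X - X \<inter> f -` B) U
     \<subseteq> X \<inter> f -` (st_set B V \<inter> st_set (Y - B) V)"
  proof
    fix x assume x: "x \<in> st_set (X \<inter> f -` B) U \<inter> st_set (X - X \<inter> f -` B) U"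
    have x1: "x \<in> st_set (X \<inter> f -` B) U" and x2: "x \<in> st_set (X - X \<inter> f -` B) U" using x by auto
    obtain a A where a0: "a \<in> X \<inter> f -` B" "A \<in> U" "a \<in> A" "x \<in> A"
      using x1 unfolding mem_st_set by blast
    then have a: "a \<in> X" "f a \<in> B" "A \<in> U" "a \<in> A" "x \<in> A" by auto
    obtain a' A' where a0': "a' \<in> X - X \<inter> f -` B" "A' \<in> U" "a' \<in> A'" "x \<in> A'"
      using x2 unfolding mem_st_set by blast
    then have a': "a' \<in> X" "f a' \<notin> B" "A' \<in> U" "a' \<in> A'" "x \<in> A'" by auto
    obtain C where C: "C \<in> V" "f ` A \<subseteq> C" using bspec[OF V(2) a(3)] by (elim bexE) (rule that)
    obtain C' where C': "C' \<in> V" "f ` A' \<subseteq> C'" using bspec[OF V(2) a'(3)] by (elim bexE) (rule that)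
    have "x \<in> X" using Ucov a by blast
    moreover have "f x \<in> st_set B V" unfolding mem_st_set using C a by blast
    moreover have "f a' \<in> Y - B" using fXY a' by blast
    then have "f x \<in> st_set (Y - B) V" unfolding mem_st_set using C' a' by blast
    ultimately show "x \<in> X \<inter> f -` (st_set B V \<inter> st_set (Y - B) V)" by blast
  qed
  have "ls_bounded LY (st_set B V \<inter> st_set (Y - B) V)" using B V unfolding coarsely_clopen_def by blast
  then have "ls_bounded LX (X \<inter> f -` (st_set B V \<inter> st_set (Y - B) V))"
    using co unfolding coarse_map_def by blast
  then show "ls_bounded LX (st_set (X \<inter> f -` B) U \<inter> st_set (X - X \<inter> f -` B) U)"
    using sub bnd_mono by blast
qed

lemma close_diff:
  assumes cl: "maps_close X L h id" and A: "coarsely_clopen X L A" and hX: "h ` X \<subseteq> X"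
  shows "ls_bounded L (A - {x\<in>X. h x \<in> A})" "ls_bounded L ({x\<in>X. h x \<in> A} - A)"
proof -
  obtain W where W: "W \<in> L" "\<forall>x\<in>X. h x \<in> st_pt x W" using cl unfolding maps_close_def by auto
  have AX: "A \<subseteq> X" using cc_sub[OF A] .
  have bd: "ls_bounded L (st_set A W \<inter> st_set (X - A) W)" using A W unfolding coarsely_clopen_def by blast
  have "A - {x\<in>X. h x \<in> A} \<subseteq> st_set A W \<inter> st_set (X - A) W"
  proof
    fix x assume x: "x \<in> A - {x\<in>X. h x \<in> A}"
    then have xX: "x \<in> X" using AX by blast
    then obtain C where C: "C \<in> W" "x \<in> C" "h x \<in> C" using W unfolding st_pt_def by blast
    have "h x \<in> X - A" using x xX hX by blast
    then show "x \<in> st_set A W \<inter> st_set (X - A) W" using x C unfolding Int_iff mem_st_set by blast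
  qed
  then show "ls_bounded L (A - {x\<in>X. h x \<in> A})" using bd bnd_mono by blast
  have "{x\<in>X. h x \<in> A} - A \<subseteq> st_set A W \<inter> st_set (X - A) W"
  proof
    fix x assume x: "x \<in> {x\<in>X. h x \<in> A} - A"
    then obtain C where C: "C \<in> W" "x \<in> C" "h x \<in> C" using W unfolding st_pt_def by blast
    then show "x \<in> st_set A W \<inter> st_set (X - A) W" using x unfolding Int_iff mem_st_set by blast
  qed
  then show "ls_bounded L ({x\<in>X. h x \<in> A} - A)" using bd bnd_mono by blast
qed

lemma open_rep:
  assumes T: "topological_large_scale_space T L" and B: "coarsely_clopen (topspace T) L B"
  shows "\<exists>U. openin T U \<and> coarsely_clopen (topspace T) L U \<and>
             (\<forall>E\<in>Ends (topspace T) L. B \<in> E \<longleftrightarrow> U \<in> E)"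
proof -
  let ?X = "topspace T"
  have lss: "large_scale_space ?X L" using T unfolding topological_large_scale_space_def by blast
  obtain W where W: "W \<in> L" "\<forall>A\<in>W. openin T A" using T unfolding topological_large_scale_space_def by blast
  have cov: "is_cover ?X W" using lss_cover[OF lss W(1)] .
  define U where "U = st_set B W"
  have op: "openin T U" unfolding U_def using st_open W by blast
  have BU: "B \<subseteq> U" unfolding U_def using st_self[OF cov cc_sub[OF B]] .
  have UX: "U \<subseteq> ?X" using cover_sub[OF cov] unfolding U_def subset_iff mem_st_set by blast
  have "U - B \<subseteq> st_set B W \<inter> st_set (?X - B) W"
    using UX st_self[OF cov, of "?X - B"] unfolding U_def by blast
  then have bd: "ls_bounded L (U - B)" using B W bnd_mono unfolding coarsely_clopen_def by blast
  have "U = B \<union> (U - B)" using BU by blast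
  then have ccU: "coarsely_clopen ?X L U" using cc_Un_bounded[OF lss B bd] UX by force
  have "\<forall>E\<in>Ends ?X L. B \<in> E \<longleftrightarrow> U \<in> E"
  proof
    fix E assume "E \<in> Ends ?X L"
    then have E: "is_end ?X L E" unfolding Ends_def by blast
    show "B \<in> E \<longleftrightarrow> U \<in> E"
      using L1[OF lss E _ ccU] L1[OF lss E _ B] BU bd by blast
  qed
  then show ?thesis using op ccU by blast
qed


lemma end_cc: "is_end X L E \<Longrightarrow> A \<in> E \<Longrightarrow> coarsely_clopen X L A \<and> \<not> ls_bounded L A"
  unfolding is_end_def fin_unbounded_family_def by blast

locale ce =
  fixes X :: "'a set" and LX :: "'a set set set" and Y :: "'b set" and LY :: "'b set set set"
    and f :: "'a \<Rightarrow> 'b" and g :: "'b \<Rightarrow> 'a"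
  assumes lX: "large_scale_space X LX" and lY: "large_scale_space Y LY"
    and fXY: "f ` X \<subseteq> Y" and gYX: "g ` Y \<subseteq> X"
    and cf: "coarse_map X LX Y LY f" and cg: "coarse_map Y LY X LX g"
    and lf: "ls_continuous LX LY f" and lg: "ls_continuous LY LX g"
    and clX: "maps_close X LX (g \<circ> f) id" and clY: "maps_close Y LY (f \<circ> g) id"
begin

definition Phi where "Phi E = {A. coarsely_clopen X LX A \<and> Y \<inter> g -` A \<in> E}"

lemma gf_eq: "Y \<inter> g -` (X \<inter> f -` B) = {y\<in>Y. (f \<circ> g) y \<in> B}"
  using gYX by auto

lemma fgY: "(f \<circ> g) ` Y \<subseteq> Y" and gfX: "(g \<circ> f) ` X \<subseteq> X"
  using fXY gYX by auto

lemma gf_in: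
  assumes E: "E \<in> Ends Y LY" and B: "B \<in> E"
  shows "Y \<inter> g -` (X \<inter> f -` B) \<in> E"
proof -
  have E: "is_end Y LY E" using E unfolding Ends_def by blast
  have ccB: "coarsely_clopen Y LY B" using end_cc[OF E B] by blast
  have cc1: "coarsely_clopen X LX (X \<inter> f -` B)" by (rule pullback_cc[OF lX fXY cf lf ccB])
  have cc2: "coarsely_clopen Y LY (Y \<inter> g -` (X \<inter> f -` B))" by (rule pullback_cc[OF lY gYX cg lg cc1])
  have "ls_bounded LY (B - {y\<in>Y. (f \<circ> g) y \<in> B})" by (rule close_diff(1)[OF clY ccB fgY])
  then show ?thesis using L1[OF lY E B cc2] gf_eq by simp
qed

lemma fs_in: "E \<in> Ends Y LY \<Longrightarrow> B \<in> E \<Longrightarrow> X \<inter> f -` B \<in> Phi E"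
  unfolding Phi_def using gf_in pullback_cc[OF lX fXY cf lf] end_cc unfolding Ends_def by blast

lemma Phi_end:
  assumes EE: "E \<in> Ends Y LY"
  shows "Phi E \<in> Ends X LX"
proof -
  have E: "is_end Y LY E" using EE unfolding Ends_def by blast
  have fE: "fin_unbounded_family Y LY E" using E unfolding is_end_def by blast
  have fin: "fin_unbounded_family X LX (Phi E)"
    unfolding fin_unbounded_family_def
  proof (rule conjI)
    show "\<forall>A\<in>Phi E. coarsely_clopen X LX A \<and> \<not> ls_bounded LX A"
    proof
      fix A assume A: "A \<in> Phi E"
      then have cc: "coarsely_clopen X LX A" and gA: "Y \<inter> g -` A \<in> E" unfolding Phi_def by auto
      have "\<not> ls_bounded LY (Y \<inter> g -` A)" using end_cc[OF E gA] by blast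
      then have "\<not> ls_bounded LX A" using cg unfolding coarse_map_def by blast
      then show "coarsely_clopen X LX A \<and> \<not> ls_bounded LX A" using cc by blast
    qed
  next
    show "\<forall>F. F \<subseteq> Phi E \<and> finite F \<and> F \<noteq> {} \<longrightarrow> \<not> ls_bounded LX (\<Inter>F)"
    proof (intro allI impI)
      fix F assume F: "F \<subseteq> Phi E \<and> finite F \<and> F \<noteq> {}"
      have "(\<lambda>A. Y \<inter> g -` A) ` F \<subseteq> E" using F unfolding Phi_def by auto
      moreover have "finite ((\<lambda>A. Y \<inter> g -` A) ` F)" "(\<lambda>A. Y \<inter> g -` A) ` F \<noteq> {}" using F by auto
      ultimately have nb: "\<not> ls_bounded LY (\<Inter>((\<lambda>A. Y \<inter> g -` A) ` F))"
        using fE unfolding fin_unbounded_family_def by blast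
      have "\<Inter>((\<lambda>A. Y \<inter> g -` A) ` F) = Y \<inter> g -` (\<Inter>F)" using F by auto
      then show "\<not> ls_bounded LX (\<Inter>F)" using nb cg unfolding coarse_map_def by metis
    qed
  qed
  show ?thesis
    unfolding Ends_def mem_Collect_eq
  proof (rule end_intro[OF fin])
    fix A assume A: "coarsely_clopen X LX A" "A \<notin> Phi E"
    then have nA: "Y \<inter> g -` A \<notin> E" unfolding Phi_def by blast
    have ccg: "coarsely_clopen Y LY (Y \<inter> g -` A)" by (rule pullback_cc[OF lY gYX cg lg A(1)])
    obtain F where F: "F \<subseteq> E" "finite F" "ls_bounded LY (\<Inter>F \<inter> (Y \<inter> g -` A))"
      using end_elim[OF E ccg nA] by blast
    let ?F' = "(\<lambda>B. X \<inter> f -` B) ` F"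
    have F'1: "?F' \<subseteq> Phi E" using fs_in[OF EE] F(1) by blast
    have F'2: "finite ?F'" using F(2) by blast
    have sub: "\<Inter>?F' \<inter> A \<subseteq> (X \<inter> f -` (\<Inter>F \<inter> (Y \<inter> g -` A))) \<union> (A - {x\<in>X. (g \<circ> f) x \<in> A})"
      using cc_sub[OF A(1)] fXY by auto
    have b1: "ls_bounded LX (X \<inter> f -` (\<Inter>F \<inter> (Y \<inter> g -` A)))" using cf F(3) unfolding coarse_map_def by blast
    have b2: "ls_bounded LX (A - {x\<in>X. (g \<circ> f) x \<in> A})" by (rule close_diff(1)[OF clX A(1) gfX])
    have "ls_bounded LX (\<Inter>?F' \<inter> A)" using bnd_Un[OF lX b1 b2] bnd_mono sub by blast
    then show "\<exists>F\<subseteq>Phi E. finite F \<and> ls_bounded LX (\<Inter>F \<inter> A)" using F'1 F'2 by blast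
  qed
qed

lemma Phi_back:
  assumes EE: "E \<in> Ends Y LY"
  shows "{B. coarsely_clopen Y LY B \<and> X \<inter> f -` B \<in> Phi E} = E"
proof
  have E: "is_end Y LY E" using EE unfolding Ends_def by blast
  show "E \<subseteq> {B. coarsely_clopen Y LY B \<and> X \<inter> f -` B \<in> Phi E}"
    using end_cc[OF E] fs_in[OF EE] by blast
  show "{B. coarsely_clopen Y LY B \<and> X \<inter> f -` B \<in> Phi E} \<subseteq> E"
  proof
    fix B assume "B \<in> {B. coarsely_clopen Y LY B \<and> X \<inter> f -` B \<in> Phi E}"
    then have ccB: "coarsely_clopen Y LY B" and inE: "Y \<inter> g -` (X \<inter> f -` B) \<in> E"
      unfolding Phi_def by auto
    have "ls_bounded LY ({y\<in>Y. (f \<circ> g) y \<in> B} - B)" by (rule close_diff(2)[OF clY ccB fgY])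
    then show "B \<in> E" using L1[OF lY E inE ccB] gf_eq by simp
  qed
qed

end

lemma cont_ends:
  assumes TX: "topological_large_scale_space TX LX" and TY: "topological_large_scale_space TY LY"
    and maps: "\<And>E. E \<in> Ends (topspace TY) LY \<Longrightarrow> P E \<in> Ends (topspace TX) LX"
    and ne: "\<And>E B. E \<in> Ends (topspace TY) LY \<Longrightarrow> B \<in> E \<Longrightarrow> \<exists>A. A \<in> P E"
    and rep: "\<And>V. coarsely_clopen (topspace TX) LX V \<Longrightarrow>
       \<exists>B. coarsely_clopen (topspace TY) LY B \<and> (\<forall>E\<in>Ends (topspace TY) LY. V \<in> P E \<longleftrightarrow> B \<in> E)"
  shows "continuous_map (ends_topology TY LY) (ends_topology TX LX) P"
proof -
  define SX where "SX = {{E \<in> Ends (topspace TX) LX. U \<in> E} | U. openin TX U \<and> coarsely_clopen (topspace TX) LX U}"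
  define SY where "SY = {{E \<in> Ends (topspace TY) LY. U \<in> E} | U. openin TY U \<and> coarsely_clopen (topspace TY) LY U}"
  have eY: "ends_topology TY LY = subtopology (topology_generated_by SY) (Ends (topspace TY) LY)"
    by (simp add: ends_topology_def SY_def)
  have eX: "ends_topology TX LX = subtopology (topology_generated_by SX) (Ends (topspace TX) LX)"
    by (simp add: ends_topology_def SX_def)
  have tsY: "topspace (ends_topology TY LY) = \<Union>SY \<inter> Ends (topspace TY) LY"
    unfolding eY by simp
  show ?thesis unfolding eX
  proof (rule continuous_map_into_subtopology)
    show "P \<in> topspace (ends_topology TY LY) \<rightarrow> Ends (topspace TX) LX" using tsY maps by auto
    show "continuous_map (ends_topology TY LY) (topology_generated_by SX) P"
    proof (rule continuous_on_generated_topo)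
      fix U assume "U \<in> SX"
      then obtain V where V: "openin TX V" "coarsely_clopen (topspace TX) LX V"
        "U = {D \<in> Ends (topspace TX) LX. V \<in> D}" unfolding SX_def by blast
      obtain B where B: "coarsely_clopen (topspace TY) LY B"
        "\<forall>E\<in>Ends (topspace TY) LY. V \<in> P E \<longleftrightarrow> B \<in> E" using rep[OF V(2)] by blast
      obtain W where W: "openin TY W" "coarsely_clopen (topspace TY) LY W"
        "\<forall>E\<in>Ends (topspace TY) LY. B \<in> E \<longleftrightarrow> W \<in> E" using open_rep[OF TY B(1)] by blast
      define s where "s = {E \<in> Ends (topspace TY) LY. W \<in> E}"
      have sS: "s \<in> SY" unfolding s_def SY_def using W by blast
      have eq: "P -` U \<inter> topspace (ends_topology TY LY) = s"
        unfolding tsY s_def using maps B(2) W(3) V(3) sS s_def by auto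
      have "openin (topology_generated_by SY) s" by (rule topology_generated_by_Basis[OF sS])
      moreover have "s = s \<inter> Ends (topspace TY) LY" unfolding s_def by blast
      ultimately have "openin (ends_topology TY LY) s" unfolding eY openin_subtopology by blast
      then show "openin (ends_topology TY LY) (P -` U \<inter> topspace (ends_topology TY LY))" using eq by simp
    next
      show "P ` topspace (ends_topology TY LY) \<subseteq> \<Union>SX"
      proof
        fix D assume "D \<in> P ` topspace (ends_topology TY LY)"
        then obtain E where E: "E \<in> \<Union>SY" "E \<in> Ends (topspace TY) LY" "D = P E" using tsY by auto
        then obtain B where "B \<in> E" unfolding SY_def by blast
        then obtain A where A: "A \<in> P E" using ne E(2) by blast
        have PE: "P E \<in> Ends (topspace TX) LX" using maps E(2) by blast
        then have "coarsely_clopen (topspace TX) LX A" using end_cc A unfolding Ends_def by blast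
        then obtain W where W: "openin TX W" "coarsely_clopen (topspace TX) LX W"
          "\<forall>E\<in>Ends (topspace TX) LX. A \<in> E \<longleftrightarrow> W \<in> E" using open_rep[OF TX] by blast
        have "P E \<in> {D \<in> Ends (topspace TX) LX. W \<in> D}" using PE A W(3) by blast
        moreover have "{D \<in> Ends (topspace TX) LX. W \<in> D} \<in> SX" unfolding SX_def using W by blast
        ultimately show "D \<in> \<Union>SX" using E(3) by blast
      qed
    qed
  qed
qed

lemma ts_ends: "topspace (ends_topology T L) \<subseteq> Ends (topspace T) L"
  unfolding ends_topology_def by simp

theorem corollary2p27:
  fixes TX :: "'a topology" and LX :: "'a set set set"
    and TY :: "'b topology" and LY :: "'b set set set"
  assumes "topological_large_scale_space TX LX"
    and "topological_large_scale_space TY LY"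
    and "coarsely_equivalent (topspace TX) LX (topspace TY) LY"
  shows "ends_topology TX LX homeomorphic_space ends_topology TY LY"
proof -
  obtain f where f: "coarse_equivalence (topspace TX) LX (topspace TY) LY f"
    using assms(3) unfolding coarsely_equivalent_def by blast
  then obtain g where fg: "f ` topspace TX \<subseteq> topspace TY" "coarse_map (topspace TX) LX (topspace TY) LY f"
    "ls_continuous LX LY f" "g ` topspace TY \<subseteq> topspace TX" "coarse_map (topspace TY) LY (topspace TX) LX g"
    "ls_continuous LY LX g" "maps_close (topspace TX) LX (g \<circ> f) id" "maps_close (topspace TY) LY (f \<circ> g) id"
    unfolding coarse_equivalence_def by blast
  have lX: "large_scale_space (topspace TX) LX" and lY: "large_scale_space (topspace TY) LY"
    using assms(1,2) unfolding topological_large_scale_space_def by blast+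
  interpret A: ce "topspace TX" LX "topspace TY" LY f g
    using lX lY fg by unfold_locales auto
  interpret B: ce "topspace TY" LY "topspace TX" LX g f
    using lX lY fg by unfold_locales auto
  have AB: "A.Phi (B.Phi D) = D" if "D \<in> Ends (topspace TX) LX" for D
    using B.Phi_back[OF that] unfolding A.Phi_def by simp
  have BA: "B.Phi (A.Phi E) = E" if "E \<in> Ends (topspace TY) LY" for E
    using A.Phi_back[OF that] unfolding B.Phi_def by simp
  have c1: "continuous_map (ends_topology TY LY) (ends_topology TX LX) A.Phi"
  proof (rule cont_ends[OF assms(1,2)])
    show "\<And>E. E \<in> Ends (topspace TY) LY \<Longrightarrow> A.Phi E \<in> Ends (topspace TX) LX" by (rule A.Phi_end)
    show "\<And>E B. E \<in> Ends (topspace TY) LY \<Longrightarrow> B \<in> E \<Longrightarrow> \<exists>A. A \<in> A.Phi E" using A.fs_in by blast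
    fix V assume V: "coarsely_clopen (topspace TX) LX V"
    show "\<exists>B. coarsely_clopen (topspace TY) LY B \<and> (\<forall>E\<in>Ends (topspace TY) LY. V \<in> A.Phi E \<longleftrightarrow> B \<in> E)"
      using pullback_cc[OF lY fg(4,5,6) V] V unfolding A.Phi_def by blast
  qed
  have c2: "continuous_map (ends_topology TX LX) (ends_topology TY LY) B.Phi"
  proof (rule cont_ends[OF assms(2,1)])
    show "\<And>E. E \<in> Ends (topspace TX) LX \<Longrightarrow> B.Phi E \<in> Ends (topspace TY) LY" by (rule B.Phi_end)
    show "\<And>E B. E \<in> Ends (topspace TX) LX \<Longrightarrow> B \<in> E \<Longrightarrow> \<exists>A. A \<in> B.Phi E" using B.fs_in by blast
    fix V assume V: "coarsely_clopen (topspace TY) LY V"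
    show "\<exists>B. coarsely_clopen (topspace TX) LX B \<and> (\<forall>E\<in>Ends (topspace TX) LX. V \<in> B.Phi E \<longleftrightarrow> B \<in> E)"
      using pullback_cc[OF lX fg(1,2,3) V] V unfolding B.Phi_def by blast
  qed
  have "homeomorphic_maps (ends_topology TX LX) (ends_topology TY LY) B.Phi A.Phi"
    unfolding homeomorphic_maps_def
  proof (intro conjI ballI)
    show "continuous_map (ends_topology TX LX) (ends_topology TY LY) B.Phi" by (rule c2)
    show "continuous_map (ends_topology TY LY) (ends_topology TX LX) A.Phi" by (rule c1)
    fix x assume "x \<in> topspace (ends_topology TX LX)"
    then show "A.Phi (B.Phi x) = x" using AB ts_ends by blast
  next
    fix y assume "y \<in> topspace (ends_topology TY LY)"
    then show "B.Phi (A.Phi y) = y" using BA ts_ends by blast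
  qed
  then show ?thesis using homeomorphic_maps_imp_homeomorphic_space by blast
qed

end
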